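(* In the changepoint model of the context, for $0<i<n$, $$P(X_i\in\cdot\mid Y_{1:n}=y_{1:n})=P(X_{i+1}\in\cdot\mid Y_{1:n}=y_{1:n})-\sum_{\ell=i+1}^{n-1}H_{i+1,\ell}\,\tilde c_{i+1,\ell}\,\tilde q_{\ell+1}-H_{i+1,n}\,\tilde c_{i+1,n}+\sum_{\ell=0}^{i}H_{\ell i}\,\tilde c_{\ell i}\,\tilde q_{i+1}.$$
   Context: Model: Let $n\ge 1$ and fix observed data $y_1,\dots,y_n$. Let $(\mathbb X,\mathcal X)$, $(\mathbb Y,\mathcal Y)$ be standard Borel spaces, $\psi$ a $\sigma$-finite measure on $(\mathbb Y,\mathcal Y)$, $\mathcal J$ a probability measure on $(\mathbb X,\mathcal X)$, and $q_{ji}\in[0,1]$ for $0\le j<i\le n$. The model consists of random variables $C_i\in\{0,\dots,i\}$, $X_i\in\mathbb X$, $Y_i\in\mathbb Y$, $i=1,\dots,n$, with joint law factorizing as: $P(C_1=0)=q_{01}$, $P(C_1=1)=1-q_{01}$; for $i\ge2$, $C_i$ depends on the past only through $C_{i-1}$, with $P(C_i=j\mid C_{i-1}=j)=q_{ji}$ and $P(C_i=i\mid C_{i-1}=j)=1-q_{ji}$ ($0\le j\le i-1$); $X_1\sim\mathcal J$ independent of $C_1$; for $i\ge 2$, $X_i$ depends on the past only through $(C_i,X_{i-1})$, with $X_i\sim\mathcal J$ if $C_i=i$ and $X_i=X_{i-1}$ if $C_i<i$; $Y_i$ depends on all other variables only through $X_i$, with density $p(Y_i=y\mid X_i=x)$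 w.r.t. $\psi$. Assume $\int\prod_{\ell=j}^i p(Y_\ell=y_\ell\mid X_\ell=x)\,\mathcal J(dx)>0$ for all $0<j\le i\le n$. $Y_{a:b}=y_{a:b}$ abbreviates $Y_a=y_a,\dots,Y_b=y_b$. Notation: $H_{ji}=P(X_i\in\cdot\mid C_i=j,Y_{1:i}=y_{1:i})$; $\tilde c_{ji}=P(C_i=j\mid C_{i+1}=i+1,Y_{1:i}=y_{1:i})$ for $0<i<n$, and $\tilde c_{jn}=P(C_n=j\mid Y_{1:n}=y_{1:n})$; $\tilde q_i=P(C_i=i\mid Y_{1:n}=y_{1:n})$. *)

theory Defs
  imports "HOL-Probability.Probability"
begin

text \<open>Paths of the changepoint indicator C_1..C_k are
  extensional functions on {1..k} with C_i in {0..i}.  The parameters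
  (J, q, p, y) are: the prior/innovation law J of X, the persistence
  probabilities q j i, the observation density p x y (density of Y_l at y
  given X_l = x w.r.t. psi), and the fixed observed data y.\<close>

definition cp_paths :: "nat \<Rightarrow> (nat \<Rightarrow> nat) set" where
  "cp_paths k = PiE {1..k} (\<lambda>i. {0..i})"

fun cp_prior :: "(nat \<Rightarrow> nat \<Rightarrow> real) \<Rightarrow> nat \<Rightarrow> (nat \<Rightarrow> nat) \<Rightarrow> real" where
  "cp_prior q 0 c = 1"
| "cp_prior q (Suc k) c = cp_prior q k c *
     (if k = 0 then (if c 1 = 0 then q 0 1 else if c 1 = 1 then 1 - q 0 1 else 0)
      else (if c (Suc k) = c k then q (c k) (Suc k)
            else if c (Suc k) = Suc k then 1 - q (c k) (Suc k) else 0))"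

text \<open>Joint law of (C_{1:k}, X_{1:k}) and observations: X_l = Z_(C_l) with
  Z_0, ..., Z_k i.i.d. with law J (a fresh draw whenever C_l = l, otherwise
  X_l = X_(l-1)).  cp_joint k m E is the joint density (w.r.t. psi^m) at
  y_{1:m} of the event E on (C_{1:k}, X_{1:k}) together with Y_{1:m} = y_{1:m}
  (m <= k), i.e. P(E, Y_{1:m} = y_{1:m}).\<close>
definition cp_joint ::
  "'x measure \<Rightarrow> (nat \<Rightarrow> nat \<Rightarrow> real) \<Rightarrow> ('x \<Rightarrow> 'y \<Rightarrow> real) \<Rightarrow> (nat \<Rightarrow> 'y) \<Rightarrow>
   nat \<Rightarrow> nat \<Rightarrow> ((nat \<Rightarrow> nat) \<Rightarrow> (nat \<Rightarrow> 'x) \<Rightarrow> bool) \<Rightarrow> real" where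
  "cp_joint J q p y k m E =
     (\<Sum>c\<in>cp_paths k. cp_prior q k c *
        (\<integral>z. (if E c (\<lambda>l. z (c l)) then 1 else 0) * (\<Prod>l\<in>{1..m}. p (z (c l)) (y l))
           \<partial>(PiM {0..k} (\<lambda>_. J))))"

definition cp_cond ::
  "'x measure \<Rightarrow> (nat \<Rightarrow> nat \<Rightarrow> real) \<Rightarrow> ('x \<Rightarrow> 'y \<Rightarrow> real) \<Rightarrow> (nat \<Rightarrow> 'y) \<Rightarrow>
   nat \<Rightarrow> nat \<Rightarrow> ((nat \<Rightarrow> nat) \<Rightarrow> (nat \<Rightarrow> 'x) \<Rightarrow> bool) \<Rightarrow>
   ((nat \<Rightarrow> nat) \<Rightarrow> (nat \<Rightarrow> 'x) \<Rightarrow> bool) \<Rightarrow> real" where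
  "cp_cond J q p y k m E F =
     cp_joint J q p y k m (\<lambda>c x. E c x \<and> F c x) / cp_joint J q p y k m F"

definition cp_postX where
  "cp_postX J q p y n i A = cp_cond J q p y n n (\<lambda>c x. x i \<in> A) (\<lambda>_ _. True)"

definition cp_H where
  "cp_H J q p y j i A = cp_cond J q p y i i (\<lambda>c x. x i \<in> A) (\<lambda>c x. c i = j)"

definition cp_ct where
  "cp_ct J q p y n j i =
     (if i < n then cp_cond J q p y (Suc i) i (\<lambda>c x. c i = j) (\<lambda>c x. c (Suc i) = Suc i)
      else cp_cond J q p y n n (\<lambda>c x. c n = j) (\<lambda>_ _. True))"

definition cp_qt where
  "cp_qt J q p y n i = cp_cond J q p y n n (\<lambda>c x. c i = i) (\<lambda>_ _. True)"

end

theory Submission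
  imports Defs
begin

definition cp_tr :: "(nat \<Rightarrow> nat \<Rightarrow> real) \<Rightarrow> (nat \<Rightarrow> nat) \<Rightarrow> nat \<Rightarrow> real" where
  "cp_tr q c s = (if s = 1 then (if c 1 = 0 then q 0 1 else if c 1 = 1 then 1 - q 0 1 else 0)
      else (if c s = c (s - 1) then q (c (s - 1)) s
            else if c s = s then 1 - q (c (s - 1)) s else 0))"

lemma prior_prod: "cp_prior q k c = (\<Prod>s\<in>{1..k}. cp_tr q c s)"
proof (induction k)
  case 0
  then show ?case by simp
next
  case (Suc k)
  have "{1..Suc k} = insert (Suc k) {1..k}" by auto
  then show ?case using Suc by (simp add: cp_tr_def mult.commute)
qed

lemma paths_le: "c \<in> cp_paths k \<Longrightarrow> s \<in> {1..k} \<Longrightarrow> c s \<le> s"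
  unfolding cp_paths_def by (auto simp: PiE_iff)

lemma paths_out: "c \<in> cp_paths k \<Longrightarrow> s \<notin> {1..k} \<Longrightarrow> c s = undefined"
  unfolding cp_paths_def by (auto simp: PiE_iff extensional_def)

lemma valid_step:
  assumes "cp_prior q k c \<noteq> 0" "2 \<le> s" "s \<le> k"
  shows "c s = c (s - 1) \<or> c s = s"
proof -
  have "cp_tr q c s \<noteq> 0" using assms by (auto simp: prior_prod)
  then show ?thesis using assms(2) by (auto simp: cp_tr_def split: if_splits)
qed

lemma valid_interval:
  assumes P: "c \<in> cp_paths k" "cp_prior q k c \<noteq> 0"
    and "l \<le> k" "c l = j" "1 \<le> l'" "j \<le> l'" "l' \<le> l"
  shows "c l' = j"
proof -
  obtain d where d: "l = l' + d" using assms by (metis le_add_diff_inverse)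
  show ?thesis using assms(3,4) d
  proof (induction d arbitrary: l)
    case 0
    then show ?case by simp
  next
    case (Suc d)
    have "2 \<le> l" "j < l" using Suc.prems assms(5,6) by auto
    then have "c l = c (l - 1) \<or> c l = l" using valid_step[OF P(2), of l] Suc.prems by auto
    then have "c (l - 1) = j" using Suc.prems \<open>j < l\<close> by auto
    then show ?case using Suc.IH[of "l - 1"] Suc.prems by auto
  qed
qed

locale cpm =
  fixes J :: "'x measure" and q :: "nat \<Rightarrow> nat \<Rightarrow> real" and p :: "'x \<Rightarrow> 'y \<Rightarrow> real"
    and y :: "nat \<Rightarrow> 'y" and n :: nat
  assumes prob: "prob_space J"
    and qb: "\<And>j i. j < i \<Longrightarrow> i \<le> n \<Longrightarrow> 0 \<le> q j i \<and> q j i \<le> 1"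
    and pnn: "\<And>x l. x \<in> space J \<Longrightarrow> l \<in> {1..n} \<Longrightarrow> 0 \<le> p x (y l)"
    and seg: "\<And>j i. 0 < j \<Longrightarrow> j \<le> i \<Longrightarrow> i \<le> n \<Longrightarrow> (\<integral>x. (\<Prod>l\<in>{j..i}. p x (y l)) \<partial>J) > 0"
begin

lemma prior_nonneg:
  assumes "c \<in> cp_paths k" "k \<le> n"
  shows "0 \<le> cp_prior q k c"
  unfolding prior_prod
proof (rule prod_nonneg)
  fix s assume s: "s \<in> {1..k}"
  show "0 \<le> cp_tr q c s"
  proof (cases "s = 1")
    case True
    then show ?thesis using qb[of 0 1] assms s by (auto simp: cp_tr_def)
  next
    case False
    have "s - 1 \<in> {1..k}" using s False by auto
    then have "c (s - 1) \<le> s - 1" using paths_le[OF assms(1), of "s - 1"] by auto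
    then have "c (s - 1) < s" using s False by auto
    then show ?thesis using qb[of "c (s - 1)" s] assms s False by (auto simp: cp_tr_def)
  qed
qed

end

lemma regroup:
  assumes "c \<in> cp_paths k" "m \<le> k"
  shows "(\<Prod>l\<in>{1..m}. g (c l) l) = (\<Prod>j\<in>{0..k}. \<Prod>l\<in>{l\<in>{1..m}. c l = j}. g j l)"
proof -
  have sub: "c ` {1..m} \<subseteq> {0..k}" using paths_le[OF assms(1)] assms(2) by fastforce
  have "(\<Prod>j\<in>{0..k}. \<Prod>l\<in>{l\<in>{1..m}. c l = j}. g j l)
      = (\<Prod>j\<in>{0..k}. \<Prod>l\<in>{l\<in>{1..m}. c l = j}. g (c l) l)"
    by (intro prod.cong refl) auto
  also have "\<dots> = (\<Prod>l\<in>{1..m}. g (c l) l)"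
    using prod.group[OF _ _ sub, of "\<lambda>l. g (c l) l"] by simp
  finally show ?thesis by simp
qed

definition (in cpm) W where
  "W m c a A j = (\<integral>x. (if j = c a then indicator A x else 1) * (\<Prod>l\<in>{l\<in>{1..m}. c l = j}. p x (y l)) \<partial>J)"

context cpm
begin

lemma seg_int:
  assumes P: "c \<in> cp_paths k" "cp_prior q k c \<noteq> 0" and "k \<le> n" "m \<le> k"
  shows "integrable J (\<lambda>x. \<Prod>l\<in>{l\<in>{1..m}. c l = j}. p x (y l))"
proof (cases "{l\<in>{1..m}. c l = j} = {}")
  case True
  interpret prob_space J by (rule prob)
  show ?thesis unfolding True by simp
next
  case False
  define S where "S = {l\<in>{1..m}. c l = j}"
  define e where "e = Max S"
  have fin: "finite S" unfolding S_def by auto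
  have eS: "e \<in> S" using False fin unfolding e_def S_def by (intro Max_in) auto
  then have ce: "c e = j" "1 \<le> e" "e \<le> m" unfolding S_def by auto
  have je: "j \<le> e" using paths_le[OF P(1), of e] ce assms by auto
  have Seq: "S = {max 1 j..e}"
  proof
    show "S \<subseteq> {max 1 j..e}"
    proof
      fix l assume l: "l \<in> S"
      then have "c l = j" "1 \<le> l" "l \<le> m" unfolding S_def by auto
      moreover have "c l \<le> l" using paths_le[OF P(1), of l] \<open>1 \<le> l\<close> \<open>l \<le> m\<close> assms by auto
      moreover have "l \<le> e" unfolding e_def using fin l by auto
      ultimately show "l \<in> {max 1 j..e}" by auto
    qed
  next
    show "{max 1 j..e} \<subseteq> S"
    proof
      fix l assume l: "l \<in> {max 1 j..e}"
      have "c l = j" using valid_interval[OF P, of e j l] ce l assms by auto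
      then show "l \<in> S" using l ce unfolding S_def by auto
    qed
  qed
  have "0 < (\<integral>x. (\<Prod>l\<in>{max 1 j..e}. p x (y l)) \<partial>J)"
    using seg[of "max 1 j" e] ce je assms by auto
  then have "integrable J (\<lambda>x. \<Prod>l\<in>{max 1 j..e}. p x (y l))"
    using not_integrable_integral_eq by fastforce
  then show ?thesis using Seq unfolding S_def by simp
qed

lemma f_int:
  assumes P: "c \<in> cp_paths k" "cp_prior q k c \<noteq> 0" and "k \<le> n" "m \<le> k" "A \<in> sets J"
  shows "integrable J (\<lambda>x. (if j = c a then indicator A x else 1) * (\<Prod>l\<in>{l\<in>{1..m}. c l = j}. p x (y l)))"
proof (cases "j = c a")
  case True
  then show ?thesis
    using integrable_real_mult_indicator[OF assms(5) seg_int[OF assms(1-4), of j]]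
    by (simp add: mult.commute)
next
  case False
  then show ?thesis using seg_int[OF assms(1-4), of j] by simp
qed

lemma sfJ: "sigma_finite_measure J"
  using prob by (simp add: prob_space_imp_sigma_finite)

lemma PS: "product_sigma_finite (\<lambda>_. J)"
  unfolding product_sigma_finite_def using sfJ by simp

lemma IL:
  assumes P: "c \<in> cp_paths k" "cp_prior q k c \<noteq> 0" and "k \<le> n" "m \<le> k" "A \<in> sets J"
    and a: "a \<in> {1..k}"
  shows "(\<integral>z. (if \<Phi> c \<and> z (c a) \<in> A then 1 else 0) * (\<Prod>l\<in>{1..m}. p (z (c l)) (y l)) \<partial>PiM {0..k} (\<lambda>_. J))
     = (if \<Phi> c then \<Prod>j\<in>{0..k}. W m c a A j else 0)"
proof (cases "\<Phi> c")
  case False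
  then show ?thesis by simp
next
  case True
  define f where "f j x = (if j = c a then indicator A x else 1) * (\<Prod>l\<in>{l\<in>{1..m}. c l = j}. p x (y l))" for j x
  have ca: "c a \<in> {0..k}" using paths_le[OF P(1) a] a by auto
  have pw: "(if \<Phi> c \<and> z (c a) \<in> A then 1 else 0) * (\<Prod>l\<in>{1..m}. p (z (c l)) (y l))
      = (\<Prod>j\<in>{0..k}. f j (z j))" for z
  proof -
    have "(\<Prod>j\<in>{0..k}. f j (z j)) = (\<Prod>j\<in>{0..k}. (if j = c a then indicator A (z j) else 1))
         * (\<Prod>j\<in>{0..k}. \<Prod>l\<in>{l\<in>{1..m}. c l = j}. p (z j) (y l))"
      unfolding f_def by (simp add: prod.distrib)
    also have "(\<Prod>j\<in>{0..k}. (if j = c a then indicator A (z j) else 1)) = indicator A (z (c a))"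
      using ca by (subst prod.delta) auto
    also have "(\<Prod>j\<in>{0..k}. \<Prod>l\<in>{l\<in>{1..m}. c l = j}. p (z j) (y l))
        = (\<Prod>l\<in>{1..m}. p (z (c l)) (y l))"
      using regroup[OF P(1) assms(4), of "\<lambda>j l. p (z j) (y l)"] by simp
    finally show ?thesis using True by (simp add: indicator_def)
  qed
  interpret product_sigma_finite "\<lambda>_. J" by (rule PS)
  have "(\<integral>z. (\<Prod>j\<in>{0..k}. f j (z j)) \<partial>PiM {0..k} (\<lambda>_. J)) = (\<Prod>j\<in>{0..k}. integral\<^sup>L J (f j))"
    by (rule product_integral_prod) (simp, unfold f_def, rule f_int[OF assms(1-5)])
  moreover have "(\<integral>z. (if \<Phi> c \<and> z (c a) \<in> A then 1 else 0) * (\<Prod>l\<in>{1..m}. p (z (c l)) (y l)) \<partial>PiM {0..k} (\<lambda>_. J))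
     = (\<integral>z. (\<Prod>j\<in>{0..k}. f j (z j)) \<partial>PiM {0..k} (\<lambda>_. J))"
    by (simp only: pw)
  moreover have "(\<Prod>j\<in>{0..k}. integral\<^sup>L J (f j)) = (\<Prod>j\<in>{0..k}. W m c a A j)"
    unfolding W_def f_def by simp
  ultimately show ?thesis using True by simp
qed

lemma JIL:
  assumes "k \<le> n" "m \<le> k" "A \<in> sets J" "a \<in> {1..k}"
  shows "cp_joint J q p y k m (\<lambda>c x. \<Phi> c \<and> x a \<in> A)
    = (\<Sum>c\<in>cp_paths k. cp_prior q k c * (if \<Phi> c then \<Prod>j\<in>{0..k}. W m c a A j else 0))"
  unfolding cp_joint_def
proof (intro sum.cong refl)
  fix c assume c: "c \<in> cp_paths k"
  show "cp_prior q k c * (\<integral>z. (if \<Phi> c \<and> z (c a) \<in> A then 1 else 0) * (\<Prod>l\<in>{1..m}. p (z (c l)) (y l)) \<partial>PiM {0..k} (\<lambda>_. J))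
     = cp_prior q k c * (if \<Phi> c then \<Prod>j\<in>{0..k}. W m c a A j else 0)"
    using IL[OF c _ assms] by (cases "cp_prior q k c = 0") auto
qed

end


lemma sum_split_PiE:
  fixes P F :: "('a \<Rightarrow> 'b) \<Rightarrow> real"
  assumes disj: "I \<inter> K = {}"
    and PI: "\<And>c c'. (\<forall>i\<in>I. c i = c' i) \<Longrightarrow> P c = P c'"
    and FK: "\<And>c c'. (\<forall>i\<in>K. c i = c' i) \<Longrightarrow> F c = F c'"
  shows "(\<Sum>c\<in>PiE (I \<union> K) S. P c * F c) = (\<Sum>c\<in>PiE I S. P c) * (\<Sum>d\<in>PiE K S. F d)"
proof -
  have "(\<Sum>c\<in>PiE I S. P c) * (\<Sum>d\<in>PiE K S. F d) = (\<Sum>(a, b)\<in>PiE I S \<times> PiE K S. P a * F b)"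
    by (simp add: sum_product sum.cartesian_product)
  moreover have "(\<Sum>c\<in>PiE (I \<union> K) S. P c * F c) = (\<Sum>(a, b)\<in>PiE I S \<times> PiE K S. P a * F b)"
  proof (rule sum.reindex_bij_witness[where j = "\<lambda>c. (restrict c I, restrict c K)"
        and i = "\<lambda>(a, b) x. if x \<in> I then a x else b x"])
    fix c assume c: "c \<in> PiE (I \<union> K) S"
    show "(\<lambda>(a, b) x. if x \<in> I then a x else b x) (restrict c I, restrict c K) = c"
      using c by (auto simp: fun_eq_iff PiE_iff extensional_def)
    show "(restrict c I, restrict c K) \<in> PiE I S \<times> PiE K S" using c by auto
    have "P (restrict c I) = P c" by (rule PI) auto
    moreover have "F (restrict c K) = F c" by (rule FK) auto
    ultimately show "(case (restrict c I, restrict c K) of (a, b) \<Rightarrow> P a * F b) = P c * F c" by simp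
  next
    fix ab assume ab: "ab \<in> PiE I S \<times> PiE K S"
    obtain a b where [simp]: "ab = (a, b)" by force
    have a: "a \<in> PiE I S" and b: "b \<in> PiE K S" using ab by auto
    show "(\<lambda>c. (restrict c I, restrict c K)) ((\<lambda>(a, b) x. if x \<in> I then a x else b x) ab) = ab"
      using a b disj by (auto simp: fun_eq_iff PiE_iff extensional_def restrict_def)
    show "(\<lambda>(a, b) x. if x \<in> I then a x else b x) ab \<in> PiE (I \<union> K) S"
      using a b disj by (auto simp: PiE_iff extensional_def)
  qed
  ultimately show ?thesis by simp
qed

lemma tr_cong: "c s = c' s \<Longrightarrow> (s \<noteq> 1 \<Longrightarrow> c (s - 1) = c' (s - 1)) \<Longrightarrow> cp_tr q c s = cp_tr q c' s"
  by (cases "s = 1") (simp_all add: cp_tr_def)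

context cpm
begin

definition Past where
  "Past t \<Phi> a A = (\<Sum>c\<in>cp_paths (t - 1). cp_prior q (t - 1) c * (1 - q (c (t - 1)) t) *
      ((if \<Phi> c then 1 else 0) * (\<Prod>j\<in>{0..t - 1}. W (t - 1) c a A j)))"

definition Fut where
  "Fut k m t = (\<Sum>d\<in>PiE {t..k} (\<lambda>i. {0..i}). (if d t = t then 1 else 0) *
      ((\<Prod>s\<in>{t + 1..k}. cp_tr q d s) * (\<Prod>j\<in>{t..k}. \<integral>x. (\<Prod>l\<in>{l\<in>{t..m}. d l = j}. p x (y l)) \<partial>J)))"

lemma KEY:
  assumes t: "2 \<le> t" "t \<le> k" "k \<le> n" "t - 1 \<le> m" "m \<le> k" and a: "a \<in> {1..t - 1}" and A: "A \<in> sets J"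
    and Phi: "\<And>c c'. (\<forall>s\<in>{1..t - 1}. c s = c' s) \<Longrightarrow> \<Phi> c = \<Phi> c'"
  shows "cp_joint J q p y k m (\<lambda>c x. (\<Phi> c \<and> c t = t) \<and> x a \<in> A) = Past t \<Phi> a A * Fut k m t"
proof -
  define Pf where "Pf c = cp_prior q (t - 1) c * (1 - q (c (t - 1)) t) *
      ((if \<Phi> c then 1 else 0) * (\<Prod>j\<in>{0..t - 1}. W (t - 1) c a A j))" for c
  define Ff where "Ff d = (if d t = t then 1 else 0) *
      ((\<Prod>s\<in>{t + 1..k}. cp_tr q d s) * (\<Prod>j\<in>{t..k}. \<integral>x. (\<Prod>l\<in>{l\<in>{t..m}. d l = j}. p x (y l)) \<partial>J))" for d
  have ak: "a \<in> {1..k}" using a t by auto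
  have U: "{1..k} = {1..t - 1} \<union> {t..k}" using t by auto
  have J1: "cp_joint J q p y k m (\<lambda>c x. (\<Phi> c \<and> c t = t) \<and> x a \<in> A)
      = (\<Sum>c\<in>cp_paths k. cp_prior q k c * (if \<Phi> c \<and> c t = t then \<Prod>j\<in>{0..k}. W m c a A j else 0))"
    by (rule JIL[OF t(3,5) A ak])
  also have "\<dots> = (\<Sum>c\<in>cp_paths k. Pf c * Ff c)"
  proof (intro sum.cong refl)
    fix c assume c: "c \<in> cp_paths k"
    have prs: "cp_prior q k c = cp_prior q (t - 1) c * cp_tr q c t * (\<Prod>s\<in>{t + 1..k}. cp_tr q c s)"
    proof -
      have e: "{1..k} = {1..t - 1} \<union> insert t {t + 1..k}" using t by auto
      have "prod (cp_tr q c) ({1..t - 1} \<union> insert t {t + 1..k}) = prod (cp_tr q c) {1..t - 1} * prod (cp_tr q c) (insert t {t + 1..k})"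
        by (rule prod.union_disjoint) auto
      moreover have "prod (cp_tr q c) (insert t {t + 1..k}) = cp_tr q c t * prod (cp_tr q c) {t + 1..k}"
        by (rule prod.insert) auto
      ultimately show ?thesis unfolding prior_prod e by simp
    qed
    have ct1: "c (t - 1) \<le> t - 1" using paths_le[OF c, of "t - 1"] t by auto
    show "cp_prior q k c * (if \<Phi> c \<and> c t = t then \<Prod>j\<in>{0..k}. W m c a A j else 0) = Pf c * Ff c"
    proof (cases "\<Phi> c \<and> c t = t")
      case False
      then show ?thesis unfolding Pf_def Ff_def by auto
    next
      case True
      then have ctt: "c t = t" by simp
      have trt: "cp_tr q c t = 1 - q (c (t - 1)) t" using ctt ct1 t by (auto simp: cp_tr_def)
      have RHS: "Pf c * Ff c = cp_prior q k c * ((\<Prod>j\<in>{0..t - 1}. W (t - 1) c a A j) *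
          (\<Prod>j\<in>{t..k}. \<integral>x. (\<Prod>l\<in>{l\<in>{t..m}. c l = j}. p x (y l)) \<partial>J))"
        unfolding Pf_def Ff_def prs trt using True by simp
      show ?thesis
      proof (cases "cp_prior q k c = 0")
        case True
        then show ?thesis using RHS by simp
      next
        case False
        have ca: "c a \<le> t - 1" using paths_le[OF c ak] a by auto
        have "(\<Prod>j\<in>{0..k}. W m c a A j) = (\<Prod>j\<in>{0..t - 1}. W m c a A j) * (\<Prod>j\<in>{t..k}. W m c a A j)"
        proof -
          have e: "{0..k} = {0..t - 1} \<union> {t..k}" using t by auto
          show ?thesis unfolding e by (rule prod.union_disjoint) (use t in auto)
        qed
        also have "(\<Prod>j\<in>{0..t - 1}. W m c a A j) = (\<Prod>j\<in>{0..t - 1}. W (t - 1) c a A j)"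
        proof (intro prod.cong refl)
          fix j assume j: "j \<in> {0..t - 1}"
          have "{l\<in>{1..m}. c l = j} = {l\<in>{1..t - 1}. c l = j}"
          proof (intro set_eqI iffI)
            fix l assume l: "l \<in> {l\<in>{1..m}. c l = j}"
            show "l \<in> {l\<in>{1..t - 1}. c l = j}"
            proof (rule ccontr)
              assume "l \<notin> {l\<in>{1..t - 1}. c l = j}"
              then have "t \<le> l" using l by auto
              then have "c t = j" using valid_interval[OF c False, of l j t] l j t by auto
              then show False using ctt j t by auto
            qed
          qed (use t in auto)
          then show "W m c a A j = W (t - 1) c a A j" unfolding W_def by simp
        qed
        also have "(\<Prod>j\<in>{t..k}. W m c a A j) = (\<Prod>j\<in>{t..k}. \<integral>x. (\<Prod>l\<in>{l\<in>{t..m}. c l = j}. p x (y l)) \<partial>J)"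
        proof (intro prod.cong refl)
          fix j assume j: "j \<in> {t..k}"
          have "{l\<in>{1..m}. c l = j} = {l\<in>{t..m}. c l = j}"
          proof (intro set_eqI iffI)
            fix l assume l: "l \<in> {l\<in>{1..m}. c l = j}"
            then have "c l \<le> l" using paths_le[OF c, of l] t by auto
            then show "l \<in> {l\<in>{t..m}. c l = j}" using l j by auto
          qed (use t in auto)
          moreover have "j \<noteq> c a" using j ca t by auto
          ultimately show "W m c a A j = (\<integral>x. (\<Prod>l\<in>{l\<in>{t..m}. c l = j}. p x (y l)) \<partial>J)"
            unfolding W_def by simp
        qed
        finally show ?thesis using RHS True by simp
      qed
    qed
  qed
  also have "\<dots> = (\<Sum>c\<in>cp_paths (t - 1). Pf c) * (\<Sum>d\<in>PiE {t..k} (\<lambda>i. {0..i}). Ff d)"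
    unfolding cp_paths_def U
  proof (rule sum_split_PiE)
    show "{1..t - 1} \<inter> {t..k} = {}" by auto
  next
    fix c c' :: "nat \<Rightarrow> nat" assume ag: "\<forall>i\<in>{1..t - 1}. c i = c' i"
    have ag2: "c (s - 1) = c' (s - 1)" if "s \<in> {1..t - 1}" "s \<noteq> 1" for s
    proof -
      have "s - 1 \<in> {1..t - 1}" using that by auto
      then show ?thesis using ag by blast
    qed
    have "cp_prior q (t - 1) c = cp_prior q (t - 1) c'"
      unfolding prior_prod by (intro prod.cong refl tr_cong) (use ag ag2 in auto)
    moreover have "c (t - 1) = c' (t - 1)" using ag t by auto
    moreover have "\<Phi> c = \<Phi> c'" using Phi ag by blast
    moreover have "W (t - 1) c a A j = W (t - 1) c' a A j" for j
    proof -
      have "c a = c' a" using ag a by auto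
      moreover have "{l\<in>{1..t - 1}. c l = j} = {l\<in>{1..t - 1}. c' l = j}" using ag by auto
      ultimately show ?thesis unfolding W_def by simp
    qed
    ultimately show "Pf c = Pf c'" unfolding Pf_def by simp
  next
    fix c c' :: "nat \<Rightarrow> nat" assume ag: "\<forall>i\<in>{t..k}. c i = c' i"
    have ag2: "c (s - 1) = c' (s - 1)" if "s \<in> {t + 1..k}" for s
    proof -
      have "s - 1 \<in> {t..k}" using that by auto
      then show ?thesis using ag by blast
    qed
    have "c t = c' t" using ag t by auto
    moreover have "(\<Prod>s\<in>{t + 1..k}. cp_tr q c s) = (\<Prod>s\<in>{t + 1..k}. cp_tr q c' s)"
      by (intro prod.cong refl tr_cong) (use ag ag2 in auto)
    moreover have "{l\<in>{t..m}. c l = j} = {l\<in>{t..m}. c' l = j}" for j using ag t by auto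
    ultimately show "Ff c = Ff c'" unfolding Ff_def by simp
  qed
  also have "\<dots> = Past t \<Phi> a A * Fut k m t" unfolding Past_def Fut_def Pf_def Ff_def by simp
  finally show ?thesis .
qed

end


context cpm
begin

lemma F0:
  assumes "1 \<le> t"
  shows "Fut t (t - 1) t = 1"
proof -
  interpret prob_space J by (rule prob)
  have e1: "{t..t} = {t}" by auto
  have e2: "{l\<in>{t..t - 1}. d l = j} = {}" for d :: "nat \<Rightarrow> nat" and j using assms by auto
  have "Fut t (t - 1) t = (\<Sum>d\<in>PiE {t} (\<lambda>i. {0..i}). \<Prod>x\<in>{t}. (if d x = t then 1 else 0))"
    unfolding Fut_def e1 e2 by (simp add: prob_space)
  also have "\<dots> = (\<Prod>x\<in>{t}. \<Sum>v\<in>{0..x}. (if v = t then 1 else 0))"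
    by (rule prod_sum_PiE[symmetric]) auto
  also have "\<dots> = 1" by simp
  finally show ?thesis .
qed

lemma EXT:
  assumes t: "2 \<le> t" "t \<le> n" and a: "a \<in> {1..t - 1}" and A: "A \<in> sets J"
    and Phi: "\<And>c c'. (\<forall>s\<in>{1..t - 1}. c s = c' s) \<Longrightarrow> \<Phi> c = \<Phi> c'"
  shows "cp_joint J q p y t (t - 1) (\<lambda>c x. ((\<Phi> c \<and> c (t - 1) = j) \<and> c t = t) \<and> x a \<in> A)
    = (1 - q j t) * cp_joint J q p y (t - 1) (t - 1) (\<lambda>c x. (\<Phi> c \<and> c (t - 1) = j) \<and> x a \<in> A)"
proof -
  have Phi': "(\<Phi> c \<and> c (t - 1) = j) = (\<Phi> c' \<and> c' (t - 1) = j)" if "\<forall>s\<in>{1..t - 1}. c s = c' s" for c c'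
  proof -
    have "c (t - 1) = c' (t - 1)" using that t by auto
    then show ?thesis using Phi[OF that] by simp
  qed
  have "cp_joint J q p y t (t - 1) (\<lambda>c x. ((\<Phi> c \<and> c (t - 1) = j) \<and> c t = t) \<and> x a \<in> A)
      = Past t (\<lambda>c. \<Phi> c \<and> c (t - 1) = j) a A * Fut t (t - 1) t"
    using KEY[of t t "t - 1" a A "\<lambda>c. \<Phi> c \<and> c (t - 1) = j", OF t(1) order.refl t(2) order.refl diff_le_self a A Phi'] by simp
  also have "\<dots> = Past t (\<lambda>c. \<Phi> c \<and> c (t - 1) = j) a A" using F0 t by simp
  also have "\<dots> = (1 - q j t) * (\<Sum>c\<in>cp_paths (t - 1). cp_prior q (t - 1) c *
      (if \<Phi> c \<and> c (t - 1) = j then \<Prod>i\<in>{0..t - 1}. W (t - 1) c a A i else 0))"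
    unfolding Past_def sum_distrib_left by (intro sum.cong refl) simp
  also have "\<dots> = (1 - q j t) * cp_joint J q p y (t - 1) (t - 1) (\<lambda>c x. (\<Phi> c \<and> c (t - 1) = j) \<and> x a \<in> A)"
    using JIL[of "t - 1" "t - 1" A a "\<lambda>c. \<Phi> c \<and> c (t - 1) = j"] t a A by simp
  finally show ?thesis .
qed

lemma g_int:
  assumes P: "c \<in> cp_paths k" "cp_prior q k c \<noteq> 0" and "k \<le> n" "m \<le> k"
  shows "integrable (PiM {0..k} (\<lambda>_. J)) (\<lambda>z. \<Prod>l\<in>{1..m}. p (z (c l)) (y l))"
proof -
  interpret product_sigma_finite "\<lambda>_. J" by (rule PS)
  have "integrable (PiM {0..k} (\<lambda>_. J)) (\<lambda>z. \<Prod>j\<in>{0..k}. \<Prod>l\<in>{l\<in>{1..m}. c l = j}. p (z j) (y l))"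
    by (rule product_integrable_prod) (simp, rule seg_int[OF assms])
  moreover have "(\<lambda>z. \<Prod>l\<in>{1..m}. p (z (c l)) (y l))
      = (\<lambda>z. \<Prod>j\<in>{0..k}. \<Prod>l\<in>{l\<in>{1..m}. c l = j}. p (z j) (y l))"
  proof
    fix z show "(\<Prod>l\<in>{1..m}. p (z (c l)) (y l)) = (\<Prod>j\<in>{0..k}. \<Prod>l\<in>{l\<in>{1..m}. c l = j}. p (z j) (y l))"
      using regroup[OF P(1) assms(4), of "\<lambda>j l. p (z j) (y l)"] by simp
  qed
  ultimately show ?thesis by simp
qed

lemma g_nonneg:
  assumes c: "c \<in> cp_paths k" and "k \<le> n" "m \<le> k" and z: "z \<in> space (PiM {0..k} (\<lambda>_. J))"
  shows "0 \<le> (\<Prod>l\<in>{1..m}. p (z (c l)) (y l))"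
proof (rule prod_nonneg)
  fix l assume l: "l \<in> {1..m}"
  have "c l \<le> l" using paths_le[OF c, of l] l assms by auto
  then have "z (c l) \<in> space J" using z l assms by (auto simp: space_PiM PiE_iff)
  then show "0 \<le> p (z (c l)) (y l)" using pnn l assms by auto
qed

lemma MONO:
  assumes "k \<le> n" "m \<le> k" and EF: "\<And>c x. E c x \<Longrightarrow> F c"
  shows "0 \<le> cp_joint J q p y k m E" "cp_joint J q p y k m E \<le> cp_joint J q p y k m (\<lambda>c x. F c)"
proof -
  show "0 \<le> cp_joint J q p y k m E"
    unfolding cp_joint_def
  proof (intro sum_nonneg mult_nonneg_nonneg)
    fix c assume c: "c \<in> cp_paths k"
    show "0 \<le> cp_prior q k c" using prior_nonneg[OF c assms(1)] .
    show "0 \<le> (\<integral>z. (if E c (\<lambda>l. z (c l)) then 1 else 0) * (\<Prod>l\<in>{1..m}. p (z (c l)) (y l)) \<partial>PiM {0..k} (\<lambda>_. J))"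
      by (intro integral_nonneg_AE AE_I2 mult_nonneg_nonneg g_nonneg[OF c assms(1,2)]) auto
  qed
  show "cp_joint J q p y k m E \<le> cp_joint J q p y k m (\<lambda>c x. F c)"
    unfolding cp_joint_def
  proof (intro sum_mono)
    fix c assume c: "c \<in> cp_paths k"
    have pr: "0 \<le> cp_prior q k c" using prior_nonneg[OF c assms(1)] .
    show "cp_prior q k c * (\<integral>z. (if E c (\<lambda>l. z (c l)) then 1 else 0) * (\<Prod>l\<in>{1..m}. p (z (c l)) (y l)) \<partial>PiM {0..k} (\<lambda>_. J))
        \<le> cp_prior q k c * (\<integral>z. (if F c then 1 else 0) * (\<Prod>l\<in>{1..m}. p (z (c l)) (y l)) \<partial>PiM {0..k} (\<lambda>_. J))"
    proof (cases "cp_prior q k c = 0")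
      case True
      then show ?thesis by simp
    next
      case False
      have "(\<integral>z. (if E c (\<lambda>l. z (c l)) then 1 else 0) * (\<Prod>l\<in>{1..m}. p (z (c l)) (y l)) \<partial>PiM {0..k} (\<lambda>_. J))
        \<le> (\<integral>z. (if F c then 1 else 0) * (\<Prod>l\<in>{1..m}. p (z (c l)) (y l)) \<partial>PiM {0..k} (\<lambda>_. J))"
      proof (rule integral_mono')
        show "integrable (PiM {0..k} (\<lambda>_. J)) (\<lambda>z. (if F c then 1 else 0) * (\<Prod>l\<in>{1..m}. p (z (c l)) (y l)))"
          using g_int[OF c False assms(1,2)] by (cases "F c") auto
      next
        fix z assume z: "z \<in> space (PiM {0..k} (\<lambda>_. J))"
        have g: "0 \<le> (\<Prod>l\<in>{1..m}. p (z (c l)) (y l))" by (rule g_nonneg[OF c assms(1,2) z])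
        then show "0 \<le> (if F c then 1 else 0) * (\<Prod>l\<in>{1..m}. p (z (c l)) (y l))" by simp
        show "(if E c (\<lambda>l. z (c l)) then 1 else 0) * (\<Prod>l\<in>{1..m}. p (z (c l)) (y l))
            \<le> (if F c then 1 else 0) * (\<Prod>l\<in>{1..m}. p (z (c l)) (y l))"
          using g EF by auto
      qed
      then show ?thesis using pr by (rule mult_left_mono)
    qed
  qed
qed

end


context cpm
begin

definition U where
  "U A k m c j = (\<integral>z. (if z j \<in> A then 1 else 0) * (\<Prod>l\<in>{1..m}. p (z (c l)) (y l)) \<partial>PiM {0..k} (\<lambda>_. J))"

lemma ULEM:
  "cp_joint J q p y k m (\<lambda>c x. x a \<in> A \<and> \<Phi> c)
    = (\<Sum>c\<in>cp_paths k. cp_prior q k c * (if \<Phi> c then U A k m c (c a) else 0))"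
  unfolding cp_joint_def U_def
proof (intro sum.cong refl)
  fix c show "cp_prior q k c * (\<integral>z. (if z (c a) \<in> A \<and> \<Phi> c then 1 else 0) * (\<Prod>l\<in>{1..m}. p (z (c l)) (y l)) \<partial>PiM {0..k} (\<lambda>_. J))
    = cp_prior q k c * (if \<Phi> c then (\<integral>z. (if z (c a) \<in> A then 1 else 0) * (\<Prod>l\<in>{1..m}. p (z (c l)) (y l)) \<partial>PiM {0..k} (\<lambda>_. J)) else 0)"
    by (cases "\<Phi> c") simp_all
qed

lemma SPACE:
  assumes "1 \<le> k"
  shows "cp_joint J q p y k m (\<lambda>c x. \<Phi> c) = cp_joint J q p y k m (\<lambda>c x. \<Phi> c \<and> x 1 \<in> space J)"
  unfolding cp_joint_def
proof (intro sum.cong refl)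
  fix c assume c: "c \<in> cp_paths k"
  have "(\<integral>z. (if \<Phi> c then 1 else 0) * (\<Prod>l\<in>{1..m}. p (z (c l)) (y l)) \<partial>PiM {0..k} (\<lambda>_. J)) =
        (\<integral>z. (if \<Phi> c \<and> z (c 1) \<in> space J then 1 else 0) * (\<Prod>l\<in>{1..m}. p (z (c l)) (y l)) \<partial>PiM {0..k} (\<lambda>_. J))"
  proof (rule Bochner_Integration.integral_cong[OF refl])
  fix z assume z: "z \<in> space (PiM {0..k} (\<lambda>_. J))"
  have "c 1 \<le> 1" using paths_le[OF c, of 1] assms by auto
  then have "z (c 1) \<in> space J" using z assms by (auto simp: space_PiM PiE_iff)
  then show "(if \<Phi> c then 1 else 0) * (\<Prod>l\<in>{1..m}. p (z (c l)) (y l)) =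
         (if \<Phi> c \<and> z (c 1) \<in> space J then 1 else 0) * (\<Prod>l\<in>{1..m}. p (z (c l)) (y l))"
    by simp
  qed
  then show "cp_prior q k c * (\<integral>z. (if \<Phi> c then 1 else 0) * (\<Prod>l\<in>{1..m}. p (z (c l)) (y l)) \<partial>PiM {0..k} (\<lambda>_. J)) =
        cp_prior q k c * (\<integral>z. (if \<Phi> c \<and> z (c 1) \<in> space J then 1 else 0) * (\<Prod>l\<in>{1..m}. p (z (c l)) (y l)) \<partial>PiM {0..k} (\<lambda>_. J))"
    by simp
qed

lemma pathwise:
  assumes c: "c \<in> cp_paths n" "cp_prior q n c \<noteq> 0" and i: "0 < i" "i < n"
  shows "(V (c i) :: real) = V (c (i + 1))
     - (\<Sum>l = i + 1..n - 1. if c l = i + 1 \<and> c (l + 1) = l + 1 then V (c l) else 0)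
     - (if c n = i + 1 then V (c n) else 0)
     + (\<Sum>l = 0..i. if c i = l \<and> c (i + 1) = i + 1 then V (c i) else 0)"
proof -
  have ci: "c i \<in> {0..i}" using paths_le[OF c(1), of i] i by auto
  have S0: "(\<Sum>l = 0..i. if c i = l \<and> c (i + 1) = i + 1 then V (c i) else 0)
      = (if c (i + 1) = i + 1 then V (c i) else 0)"
    using ci by (cases "c (i + 1) = i + 1") (simp_all add: sum.delta)
  show ?thesis
  proof (cases "c (i + 1) = i + 1")
    case False
    have st: "c (i + 1) = c i" using valid_step[OF c(2), of "i + 1"] i False by auto
    have nz: "c l \<noteq> i + 1" if "i + 1 \<le> l" "l \<le> n" for l
    proof
      assume "c l = i + 1"
      then have "c (i + 1) = i + 1" using valid_interval[OF c, of l "i + 1" "i + 1"] that by auto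
      then show False using False by simp
    qed
    have "(\<Sum>l = i + 1..n - 1. if c l = i + 1 \<and> c (l + 1) = l + 1 then V (c l) else 0) = 0"
      by (intro sum.neutral) (use nz in auto)
    then show ?thesis using S0 False st nz[of n] i by simp
  next
    case True
    define a where "a l = (if c l = i + 1 then 1 else 0 :: real)" for l
    have trm: "(if c l = i + 1 \<and> c (l + 1) = l + 1 then V (c l) else 0) = (a l - a (Suc l)) * V (i + 1)"
      if l: "l \<in> {i + 1..n - 1}" for l
    proof (cases "c l = i + 1")
      case True
      have "c (l + 1) = c l \<or> c (l + 1) = l + 1" using valid_step[OF c(2), of "l + 1"] l i by auto
      then show ?thesis using True l unfolding a_def by auto
    next
      case False
      have "c (Suc l) \<noteq> i + 1"
      proof
        assume "c (Suc l) = i + 1"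
        then have "c l = i + 1" using valid_interval[OF c, of "Suc l" "i + 1" l] l i by auto
        then show False using False by simp
      qed
      then show ?thesis using False unfolding a_def by auto
    qed
    have "(\<Sum>l = i + 1..n - 1. if c l = i + 1 \<and> c (l + 1) = l + 1 then V (c l) else 0)
        = (\<Sum>l = i + 1..n - 1. (a l - a (Suc l))) * V (i + 1)"
      unfolding sum_distrib_right by (intro sum.cong refl trm) auto
    also have "(\<Sum>l = i + 1..n - 1. (a l - a (Suc l))) = a (i + 1) - a n"
    proof -
      have "(\<Sum>l = i + 1..n - 1. (- a (Suc l)) - (- a l)) = - a (Suc (n - 1)) - (- a (i + 1))"
        by (rule sum_Suc_diff) (use i in auto)
      moreover have "Suc (n - 1) = n" using i by auto
      ultimately show ?thesis by simp
    qed
    finally have X: "(\<Sum>l = i + 1..n - 1. if c l = i + 1 \<and> c (l + 1) = l + 1 then V (c l) else 0)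
        = (a (i + 1) - a n) * V (i + 1)" .
    have "(if c n = i + 1 then V (c n) else 0) = a n * V (i + 1)" unfolding a_def by auto
    moreover have "a (i + 1) = 1" using True unfolding a_def by simp
    ultimately show ?thesis using X S0 True by (simp add: algebra_simps)
  qed
qed

lemma FIN:
  assumes i: "0 < i" "i < n"
  shows "cp_joint J q p y n n (\<lambda>c x. x i \<in> A \<and> True) =
     cp_joint J q p y n n (\<lambda>c x. x (i + 1) \<in> A \<and> True)
     - (\<Sum>l = i + 1..n - 1. cp_joint J q p y n n (\<lambda>c x. (x l \<in> A \<and> c l = i + 1) \<and> c (l + 1) = l + 1))
     - cp_joint J q p y n n (\<lambda>c x. x n \<in> A \<and> c n = i + 1)
     + (\<Sum>l = 0..i. cp_joint J q p y n n (\<lambda>c x. (x i \<in> A \<and> c i = l) \<and> c (i + 1) = i + 1))"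
proof -
  let ?P = "\<lambda>c. cp_prior q n c" and ?V = "\<lambda>c. U A n n c"
  have e1: "cp_joint J q p y n n (\<lambda>c x. (x l \<in> A \<and> c l = i + 1) \<and> c (l + 1) = l + 1)
     = (\<Sum>c\<in>cp_paths n. ?P c * (if c l = i + 1 \<and> c (l + 1) = l + 1 then ?V c (c l) else 0))" for l
    using ULEM[of n n l A "\<lambda>c. c l = i + 1 \<and> c (l + 1) = l + 1"] by (simp add: conj_assoc)
  have e2: "cp_joint J q p y n n (\<lambda>c x. (x i \<in> A \<and> c i = l) \<and> c (i + 1) = i + 1)
     = (\<Sum>c\<in>cp_paths n. ?P c * (if c i = l \<and> c (i + 1) = i + 1 then ?V c (c i) else 0))" for l
    using ULEM[of n n i A "\<lambda>c. c i = l \<and> c (i + 1) = i + 1"] by (simp add: conj_assoc)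
  have e3: "cp_joint J q p y n n (\<lambda>c x. x n \<in> A \<and> c n = i + 1)
     = (\<Sum>c\<in>cp_paths n. ?P c * (if c n = i + 1 then ?V c (c n) else 0))"
    using ULEM[of n n n A "\<lambda>c. c n = i + 1"] by simp
  have e4: "cp_joint J q p y n n (\<lambda>c x. x a \<in> A \<and> True) = (\<Sum>c\<in>cp_paths n. ?P c * ?V c (c a))" for a
    using ULEM[of n n a A "\<lambda>c. True"] by simp
  have "(\<Sum>c\<in>cp_paths n. ?P c * ?V c (c i)) = (\<Sum>c\<in>cp_paths n. ?P c * ?V c (c (i + 1))
     - (\<Sum>l = i + 1..n - 1. ?P c * (if c l = i + 1 \<and> c (l + 1) = l + 1 then ?V c (c l) else 0))
     - ?P c * (if c n = i + 1 then ?V c (c n) else 0)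
     + (\<Sum>l = 0..i. ?P c * (if c i = l \<and> c (i + 1) = i + 1 then ?V c (c i) else 0)))"
  proof (intro sum.cong refl)
    fix c assume c: "c \<in> cp_paths n"
    show "?P c * ?V c (c i) = ?P c * ?V c (c (i + 1))
     - (\<Sum>l = i + 1..n - 1. ?P c * (if c l = i + 1 \<and> c (l + 1) = l + 1 then ?V c (c l) else 0))
     - ?P c * (if c n = i + 1 then ?V c (c n) else 0)
     + (\<Sum>l = 0..i. ?P c * (if c i = l \<and> c (i + 1) = i + 1 then ?V c (c i) else 0))"
    proof (cases "?P c = 0")
      case True
      then show ?thesis by simp
    next
      case False
      show ?thesis
        unfolding sum_distrib_left[symmetric]
        by (subst pathwise[OF c False i, of "?V c"]) (simp add: algebra_simps)
    qed
  qed
  moreover have sw1: "(\<Sum>c\<in>cp_paths n. \<Sum>l\<in>{i + 1..n - 1}. f c l) = (\<Sum>l\<in>{i + 1..n - 1}. \<Sum>c\<in>cp_paths n. f c l)"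
    for f :: "(nat \<Rightarrow> nat) \<Rightarrow> nat \<Rightarrow> real" by (rule sum.swap)
  moreover have sw2: "(\<Sum>c\<in>cp_paths n. \<Sum>l\<in>{0..i}. f c l) = (\<Sum>l\<in>{0..i}. \<Sum>c\<in>cp_paths n. f c l)"
    for f :: "(nat \<Rightarrow> nat) \<Rightarrow> nat \<Rightarrow> real" by (rule sum.swap)
  ultimately show ?thesis
    unfolding e1 e2 e3 e4 sum_subtractf sum.distrib by simp
qed

end


context cpm
begin

lemma TERM:
  assumes l: "1 \<le> l" "l < n" and A: "A \<in> sets J"
  shows "cp_H J q p y j l A * cp_ct J q p y n j l * cp_qt J q p y n (l + 1)
    = cp_joint J q p y n n (\<lambda>c x. (x l \<in> A \<and> c l = j) \<and> c (l + 1) = l + 1) / cp_joint J q p y n n (\<lambda>_ _. True)"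
proof -
  define t where "t = Suc l"
  have t: "2 \<le> t" "t \<le> n" "t - 1 = l" using l unfolding t_def by auto
  have SJ: "space J \<in> sets J" by simp
  have a1: "1 \<in> {1..t - 1}" and al: "l \<in> {1..t - 1}" using t l by auto
  define Pa where "Pa = cp_joint J q p y l l (\<lambda>c x. x l \<in> A \<and> c l = j)"
  define Pb where "Pb = cp_joint J q p y l l (\<lambda>c x. c l = j)"
  define N1 where "N1 = cp_joint J q p y t l (\<lambda>c x. c l = j \<and> c t = t)"
  define D where "D = cp_joint J q p y t l (\<lambda>c x. c t = t)"
  define Q where "Q = cp_joint J q p y n n (\<lambda>c x. c t = t)"
  define Z where "Z = cp_joint J q p y n n (\<lambda>_ _. True)"
  define R where "R = cp_joint J q p y n n (\<lambda>c x. (x l \<in> A \<and> c l = j) \<and> c t = t)"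
  define PE' where "PE' = cp_joint J q p y t l (\<lambda>c x. (x l \<in> A \<and> c l = j) \<and> c t = t)"
  define PE where "PE = Past t (\<lambda>c. c l = j) l A"
  define PT where "PT = Past t (\<lambda>c. True) 1 (space J)"
  define Fn where "Fn = Fut n n t"
  have LHS: "cp_H J q p y j l A * cp_ct J q p y n j l * cp_qt J q p y n (l + 1) = Pa / Pb * (N1 / D) * (Q / Z)"
    unfolding cp_H_def cp_ct_def cp_qt_def cp_cond_def Pa_def Pb_def N1_def D_def Q_def Z_def t_def
    using l by simp
  have RHS: "cp_joint J q p y n n (\<lambda>c x. (x l \<in> A \<and> c l = j) \<and> c (l + 1) = l + 1) = R"
    unfolding R_def t_def by simp
  have F1: "N1 = (1 - q j t) * Pb"
  proof -
    have "N1 = cp_joint J q p y t (t - 1) (\<lambda>c x. ((True \<and> c (t - 1) = j) \<and> c t = t) \<and> x 1 \<in> space J)"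
      unfolding N1_def using SPACE[of t l "\<lambda>c. c l = j \<and> c t = t"] t by simp
    also have "\<dots> = (1 - q j t) * cp_joint J q p y (t - 1) (t - 1) (\<lambda>c x. (True \<and> c (t - 1) = j) \<and> x 1 \<in> space J)"
      by (rule EXT[OF t(1,2) a1 SJ]) simp
    also have "cp_joint J q p y (t - 1) (t - 1) (\<lambda>c x. (True \<and> c (t - 1) = j) \<and> x 1 \<in> space J) = Pb"
      unfolding Pb_def using SPACE[of l l "\<lambda>c. c l = j"] t l by simp
    finally show ?thesis .
  qed
  have F2: "PE' = (1 - q j t) * Pa"
  proof -
    have e: "(\<lambda>c x. (x l \<in> A \<and> c l = j) \<and> c t = t) = (\<lambda>c x. ((True \<and> c (t - 1) = j) \<and> c t = t) \<and> x l \<in> A)"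
      using t by auto
    have e2: "(\<lambda>c x. (True \<and> c (t - 1) = j) \<and> x l \<in> A) = (\<lambda>c x. x l \<in> A \<and> c l = j)"
      using t by auto
    show ?thesis unfolding PE'_def Pa_def e
      using EXT[OF t(1,2) al A, of "\<lambda>c. True" j] t e2 by simp
  qed
  have F3a: "R = PE * Fn"
  proof -
    have e: "(\<lambda>c x. (x l \<in> A \<and> c l = j) \<and> c t = t) = (\<lambda>c x. (c l = j \<and> c t = t) \<and> x l \<in> A)"
      by auto
    show ?thesis unfolding R_def PE_def Fn_def e
      by (rule KEY) (use t l A in auto)
  qed
  have F3b: "PE' = PE"
  proof -
    have e: "(\<lambda>c x. (x l \<in> A \<and> c l = j) \<and> c t = t) = (\<lambda>c x. (c l = j \<and> c t = t) \<and> x l \<in> A)"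
      by auto
    have "PE' = PE * Fut t l t" unfolding PE'_def PE_def e
      by (rule KEY) (use t l A in auto)
    then show ?thesis using F0[of t] t by simp
  qed
  have F4a: "Q = PT * Fn"
  proof -
    have "Q = cp_joint J q p y n n (\<lambda>c x. (True \<and> c t = t) \<and> x 1 \<in> space J)"
      unfolding Q_def using SPACE[of n n "\<lambda>c. c t = t"] t by simp
    also have "\<dots> = PT * Fn" unfolding PT_def Fn_def
      by (rule KEY) (use t l in auto)
    finally show ?thesis .
  qed
  have F4b: "D = PT"
  proof -
    have "D = cp_joint J q p y t l (\<lambda>c x. (True \<and> c t = t) \<and> x 1 \<in> space J)"
      unfolding D_def using SPACE[of t l "\<lambda>c. c t = t"] t by simp
    also have "\<dots> = PT * Fut t l t" unfolding PT_def
      by (rule KEY) (use t l in auto)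
    finally show ?thesis using F0[of t] t by simp
  qed
  have F5: "0 \<le> Pa" "Pa \<le> Pb" unfolding Pa_def Pb_def
    using MONO[of l l "\<lambda>c x. x l \<in> A \<and> c l = j" "\<lambda>c. c l = j"] l by auto
  have F6: "0 \<le> PE'" "PE' \<le> D" unfolding PE'_def D_def
    using MONO[of t l "\<lambda>c x. (x l \<in> A \<and> c l = j) \<and> c t = t" "\<lambda>c. c t = t"] t by auto
  show ?thesis
    unfolding LHS RHS Z_def[symmetric]
  proof (cases "Pb = 0 \<or> PT = 0")
    case True
    then have "PE = 0" using F5 F6 F2 F3b F4b by auto
    then show "Pa / Pb * (N1 / D) * (Q / Z) = R / Z" using True F3a F4b F1 F5 by auto
  next
    case False
    have "Pa / Pb * (N1 / D) * (Q / Z) = Pa / Pb * ((1 - q j t) * Pb / PT) * (PT * Fn / Z)"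
      using F1 F4a F4b by simp
    also have "\<dots> = (1 - q j t) * Pa * Fn / Z" using False by (cases "Z = 0") (simp_all add: field_simps)
    also have "\<dots> = R / Z" using F2 F3a F3b by simp
    finally show "Pa / Pb * (N1 / D) * (Q / Z) = R / Z" .
  qed
qed

lemma LAST:
  "cp_H J q p y j n A * cp_ct J q p y n j n
    = cp_joint J q p y n n (\<lambda>c x. x n \<in> A \<and> c n = j) / cp_joint J q p y n n (\<lambda>_ _. True)"
proof -
  define R where "R = cp_joint J q p y n n (\<lambda>c x. x n \<in> A \<and> c n = j)"
  define P where "P = cp_joint J q p y n n (\<lambda>c x. c n = j)"
  have M: "0 \<le> R" "R \<le> P" unfolding R_def P_def
    using MONO[of n n "\<lambda>c x. x n \<in> A \<and> c n = j" "\<lambda>c. c n = j"] by auto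
  have "cp_H J q p y j n A * cp_ct J q p y n j n = R / P * (P / cp_joint J q p y n n (\<lambda>_ _. True))"
    unfolding cp_H_def cp_ct_def cp_cond_def R_def P_def by simp
  also have "\<dots> = R / cp_joint J q p y n n (\<lambda>_ _. True)"
    using M by (cases "P = 0") auto
  finally show ?thesis unfolding R_def .
qed

end

theorem mainTheorem11:
  fixes J :: "'x measure" and \<Psi> :: "'y measure"
    and q :: "nat \<Rightarrow> nat \<Rightarrow> real" and p :: "'x \<Rightarrow> 'y \<Rightarrow> real"
    and y :: "nat \<Rightarrow> 'y" and n i :: nat
  assumes "n \<ge> 1"
    and "prob_space J"
    and "sigma_finite_measure \<Psi>"
    and "\<And>j i. j < i \<Longrightarrow> i \<le> n \<Longrightarrow> 0 \<le> q j i \<and> q j i \<le> 1"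
    and "case_prod p \<in> borel_measurable (J \<Otimes>\<^sub>M \<Psi>)"
    and "\<And>x v. x \<in> space J \<Longrightarrow> v \<in> space \<Psi> \<Longrightarrow> 0 \<le> p x v"
    and "\<And>x. x \<in> space J \<Longrightarrow> (\<integral>\<^sup>+ v. ennreal (p x v) \<partial>\<Psi>) = 1"
    and "\<And>l. l \<in> {1..n} \<Longrightarrow> y l \<in> space \<Psi>"
    and "\<And>j i. 0 < j \<Longrightarrow> j \<le> i \<Longrightarrow> i \<le> n \<Longrightarrow>
           (\<integral>x. (\<Prod>l\<in>{j..i}. p x (y l)) \<partial>J) > 0"
    and "0 < i" and "i < n"
  shows "\<forall>A \<in> sets J.
     cp_postX J q p y n i A =
       cp_postX J q p y n (i + 1) A
       - (\<Sum>l = i + 1..n - 1. cp_H J q p y (i + 1) l A * cp_ct J q p y n (i + 1) l * cp_qt J q p y n (l + 1))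
       - cp_H J q p y (i + 1) n A * cp_ct J q p y n (i + 1) n
       + (\<Sum>l = 0..i. cp_H J q p y l i A * cp_ct J q p y n l i * cp_qt J q p y n (i + 1))"
proof
  fix A assume A: "A \<in> sets J"
  have pn: "\<And>x l. x \<in> space J \<Longrightarrow> l \<in> {1..n} \<Longrightarrow> 0 \<le> p x (y l)"
  proof -
    fix x l assume "x \<in> space J" "l \<in> {1..n}"
    then show "0 \<le> p x (y l)" using assms(6)[of x "y l"] assms(8)[of l] by blast
  qed
  interpret cpm J q p y n
    by (rule cpm.intro[of J n q p y, OF assms(2) assms(4) pn assms(9)])
  have i: "0 < i" "i < n" by fact+
  let ?Z = "cp_joint J q p y n n (\<lambda>_ _. True)"
  have s1: "(\<Sum>l = i + 1..n - 1. cp_H J q p y (i + 1) l A * cp_ct J q p y n (i + 1) l * cp_qt J q p y n (l + 1))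
      = (\<Sum>l = i + 1..n - 1. cp_joint J q p y n n (\<lambda>c x. (x l \<in> A \<and> c l = i + 1) \<and> c (l + 1) = l + 1) / ?Z)"
    by (intro sum.cong refl TERM A) (use i in auto)
  have s2: "(\<Sum>l = 0..i. cp_H J q p y l i A * cp_ct J q p y n l i * cp_qt J q p y n (i + 1))
      = (\<Sum>l = 0..i. cp_joint J q p y n n (\<lambda>c x. (x i \<in> A \<and> c i = l) \<and> c (i + 1) = i + 1) / ?Z)"
    by (intro sum.cong refl TERM A) (use i in auto)
  have p1: "cp_postX J q p y n a A = cp_joint J q p y n n (\<lambda>c x. x a \<in> A \<and> True) / ?Z" for a
    unfolding cp_postX_def cp_cond_def by simp
  show "cp_postX J q p y n i A =
       cp_postX J q p y n (i + 1) A
       - (\<Sum>l = i + 1..n - 1. cp_H J q p y (i + 1) l A * cp_ct J q p y n (i + 1) l * cp_qt J q p y n (l + 1))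
       - cp_H J q p y (i + 1) n A * cp_ct J q p y n (i + 1) n
       + (\<Sum>l = 0..i. cp_H J q p y l i A * cp_ct J q p y n l i * cp_qt J q p y n (i + 1))"
    unfolding s1 s2 p1 LAST FIN[OF i, of A]
    by (simp only: diff_divide_distrib add_divide_distrib sum_divide_distrib)
qed

end
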